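(* Let $R,S,T$ be $\mathfrak h$-modules and let $f:R\otimes S\to T$ be an (even) $\mathfrak h$-intertwiner, where $R\otimes S$ carries the tensor product action. There is a unique even linear map $Q_f:R\otimes\mathrm{Ind}(S)\to\mathrm{Ind}(T)$ such that (1) $Q_f(r\otimes s)=f(r\otimes s)$ for all $r\in R$, $s\in S$, and (2) for all $a\in\mathfrak h$, $m\in\mathbb Z$, $a_m\circ Q_f=Q_f\circ(\delta_{m,0}\,a\otimes\mathrm{id}+\mathrm{id}\otimes a_m)$.
   Context: Super vector spaces over $\mathbb C$, Koszul sign rule (e.g. $(\mathrm{id}\otimes a_m)(r\otimes v)=(-1)^{|a||r|}r\otimes a_mv$). $\mathfrak h$ is a nonzero finite-dimensional abelian Lie superalgebra with even non-degenerate supersymmetric form $(-,-)$; modes $a_m$ ($a\in\mathfrak h$, $m\in\mathbb Z$) satisfy $[a_m,b_n]=m(a,b)\delta_{m+n,0}K$ with $K$ central. For an $\mathfrak h$-module $S$, $\mathrm{Ind}(S)=U(\hat{\mathfrak h})\otimes_{U(\hat{\mathfrak h}_{\ge0}\oplus\mathbb CK)}S$, where $a_m$ ($m>0$) acts by $0$ on $S$, $a_0$ by $a$, and $K$ by $1$; $S\subset\mathrm{Ind}(S)$. *)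

theory Defs
  imports Complex_Main "HOL-Library.Function_Algebras"
begin

(* Complex super vector spaces: a type 'v with a complex scalar multiplication sc
   (a vector_space) together with the parity operator P (linear involution:
   P = id on the even part, P = -id on the odd part). *)

definition super_vs :: "(complex \<Rightarrow> 'v::ab_group_add \<Rightarrow> 'v) \<Rightarrow> ('v \<Rightarrow> 'v) \<Rightarrow> bool" where
  "super_vs sc P \<longleftrightarrow> vector_space sc \<and> Vector_Spaces.linear sc sc P \<and> (\<forall>x. P (P x) = x)"

definition homog :: "('v::ab_group_add \<Rightarrow> 'v) \<Rightarrow> 'v \<Rightarrow> bool" where
  "homog P x \<longleftrightarrow> P x = x \<or> P x = - x"

definition ksign :: "('v::ab_group_add \<Rightarrow> 'v) \<Rightarrow> 'v \<Rightarrow> 'v \<Rightarrow> complex" where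
  "ksign P a b = (if P a = - a \<and> P b = - b then -1 else 1)"

definition even_part :: "(complex \<Rightarrow> 'v::ab_group_add \<Rightarrow> 'v) \<Rightarrow> ('v \<Rightarrow> 'v) \<Rightarrow> 'v \<Rightarrow> 'v" where
  "even_part sc P x = sc (1/2) (x + P x)"

definition odd_part :: "(complex \<Rightarrow> 'v::ab_group_add \<Rightarrow> 'v) \<Rightarrow> ('v \<Rightarrow> 'v) \<Rightarrow> 'v \<Rightarrow> 'v" where
  "odd_part sc P x = sc (1/2) (x - P x)"

(* the data (h, (-,-)): nonzero finite-dimensional abelian Lie superalgebra with even
   non-degenerate supersymmetric bilinear form *)
definition heis_data :: "(complex \<Rightarrow> 'h::ab_group_add \<Rightarrow> 'h) \<Rightarrow> ('h \<Rightarrow> 'h) \<Rightarrow> ('h \<Rightarrow> 'h \<Rightarrow> complex) \<Rightarrow> bool" where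
  "heis_data sh Ph B \<longleftrightarrow>
     super_vs sh Ph \<and>
     (\<exists>Bs. finite Bs \<and> module.span sh Bs = UNIV) \<and>
     (\<exists>a::'h. a \<noteq> 0) \<and>
     (\<forall>b. Vector_Spaces.linear sh (*) (\<lambda>a. B a b)) \<and>
     (\<forall>a. Vector_Spaces.linear sh (*) (\<lambda>b. B a b)) \<and>
     (\<forall>a b. Ph a = a \<and> Ph b = - b \<longrightarrow> B a b = 0 \<and> B b a = 0) \<and>
     (\<forall>a b. homog Ph a \<and> homog Ph b \<longrightarrow> B a b = ksign Ph a b * B b a) \<and>
     (\<forall>a. (\<forall>b. B a b = 0) \<longrightarrow> a = 0)"

(* h-module: even action rho of the abelian Lie superalgebra h on a super vector space,
   i.e. rho([a,b]) = 0 = super-commutator of rho a, rho b *)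
definition h_module :: "(complex \<Rightarrow> 'h::ab_group_add \<Rightarrow> 'h) \<Rightarrow> ('h \<Rightarrow> 'h) \<Rightarrow>
    (complex \<Rightarrow> 'v::ab_group_add \<Rightarrow> 'v) \<Rightarrow> ('v \<Rightarrow> 'v) \<Rightarrow> ('h \<Rightarrow> 'v \<Rightarrow> 'v) \<Rightarrow> bool" where
  "h_module sh Ph sv Pv rho \<longleftrightarrow>
     super_vs sv Pv \<and>
     (\<forall>v. Vector_Spaces.linear sh sv (\<lambda>a. rho a v)) \<and>
     (\<forall>a. Vector_Spaces.linear sv sv (rho a)) \<and>
     (\<forall>a v. Pv (rho a v) = rho (Ph a) (Pv v)) \<and>
     (\<forall>a b v. homog Ph a \<and> homog Ph b \<longrightarrow> rho a (rho b v) = sv (ksign Ph a b) (rho b (rho a v)))"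

(* even h-intertwiner f : R (x) S -> T, represented (universal property of the tensor
   product) by a bilinear map; R (x) S carries a.(r (x) s) = a r (x) s + (-1)^{|a||r|} r (x) a s *)
definition even_intertwiner :: "(complex \<Rightarrow> 'h::ab_group_add \<Rightarrow> 'h) \<Rightarrow> ('h \<Rightarrow> 'h) \<Rightarrow>
    (complex \<Rightarrow> 'r::ab_group_add \<Rightarrow> 'r) \<Rightarrow> ('r \<Rightarrow> 'r) \<Rightarrow> ('h \<Rightarrow> 'r \<Rightarrow> 'r) \<Rightarrow>
    (complex \<Rightarrow> 's::ab_group_add \<Rightarrow> 's) \<Rightarrow> ('s \<Rightarrow> 's) \<Rightarrow> ('h \<Rightarrow> 's \<Rightarrow> 's) \<Rightarrow>
    (complex \<Rightarrow> 't::ab_group_add \<Rightarrow> 't) \<Rightarrow> ('t \<Rightarrow> 't) \<Rightarrow> ('h \<Rightarrow> 't \<Rightarrow> 't) \<Rightarrow>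
    ('r \<Rightarrow> 's \<Rightarrow> 't) \<Rightarrow> bool" where
  "even_intertwiner sh Ph sr Pr rR ss Ps rS st Pt rT f \<longleftrightarrow>
     (\<forall>s. Vector_Spaces.linear sr st (\<lambda>r. f r s)) \<and>
     (\<forall>r. Vector_Spaces.linear ss st (f r)) \<and>
     (\<forall>r s. Pt (f r s) = f (Pr r) (Ps s)) \<and>
     (\<forall>a r s. rT a (f r s) =
        f (rR a r) s + f r (rS (even_part sh Ph a) s) + f (Pr r) (rS (odd_part sh Ph a) s))"

(* ---- The induced module Ind(S) = U(hhat) (x)_{U(hhat_{>=0} + C K)} S ----
   Model: T(hhat') (x) S, where hhat' = span of the modes a_m, realised as finitely supported
   functions from words (lists of letters (a,m), a_m) to S; Ind(S) is its quotient by the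
   subspace ind_N generated by: multilinearity in the letters, the commutation relations
   (K replaced by 1), and the relations w a_m (x) s = 0 (m>0), w a_0 (x) s = w (x) a s. *)

type_synonym 'h word = "('h \<times> int) list"

definition fsc :: "(complex \<Rightarrow> 'v \<Rightarrow> 'v) \<Rightarrow> complex \<Rightarrow> ('w \<Rightarrow> 'v) \<Rightarrow> 'w \<Rightarrow> 'v" where
  "fsc sc c v = (\<lambda>u. sc c (v u))"

definition tens :: "'h word \<Rightarrow> 's::zero \<Rightarrow> 'h word \<Rightarrow> 's" where
  "tens w s = (\<lambda>u. if u = w then s else 0)"

definition fin_supp :: "('w \<Rightarrow> 's::zero) \<Rightarrow> bool" where
  "fin_supp v \<longleftrightarrow> finite {u. v u \<noteq> 0}"

definition mode :: "'h \<Rightarrow> int \<Rightarrow> ('h word \<Rightarrow> 's::zero) \<Rightarrow> 'h word \<Rightarrow> 's" where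
  "mode a m v = (\<lambda>u. case u of [] \<Rightarrow> 0 | x # u' \<Rightarrow> if x = (a, m) then v u' else 0)"

definition vpar :: "('h \<Rightarrow> 'h) \<Rightarrow> ('s \<Rightarrow> 's) \<Rightarrow> ('h word \<Rightarrow> 's) \<Rightarrow> 'h word \<Rightarrow> 's" where
  "vpar Ph Ps v = (\<lambda>u. Ps (v (map (\<lambda>(a, n). (Ph a, n)) u)))"

definition ind_rels :: "(complex \<Rightarrow> 'h::ab_group_add \<Rightarrow> 'h) \<Rightarrow> ('h \<Rightarrow> 'h) \<Rightarrow> ('h \<Rightarrow> 'h \<Rightarrow> complex) \<Rightarrow>
    (complex \<Rightarrow> 's::ab_group_add \<Rightarrow> 's) \<Rightarrow> ('h \<Rightarrow> 's \<Rightarrow> 's) \<Rightarrow> ('h word \<Rightarrow> 's) set" where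
  "ind_rels sh Ph B ss rS =
     {tens (w1 @ (sh c a + b, m) # w2) s - fsc ss c (tens (w1 @ (a, m) # w2) s) - tens (w1 @ (b, m) # w2) s
       | w1 w2 c a b m s. True}
   \<union> {tens (w1 @ (a, m) # (b, n) # w2) s - tens (w1 @ (b, n) # (a, m) # w2) (ss (ksign Ph a b) s)
        - tens (w1 @ w2) (ss (of_int m * (if m + n = 0 then B a b else 0)) s)
       | w1 w2 a b m n s. homog Ph a \<and> homog Ph b}
   \<union> {tens (w @ [(a, m)]) s | w a m s. m > 0}
   \<union> {tens (w @ [(a, 0)]) s - tens w (rS a s) | w a s. True}"

definition ind_N :: "(complex \<Rightarrow> 'h::ab_group_add \<Rightarrow> 'h) \<Rightarrow> ('h \<Rightarrow> 'h) \<Rightarrow> ('h \<Rightarrow> 'h \<Rightarrow> complex) \<Rightarrow>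
    (complex \<Rightarrow> 's::ab_group_add \<Rightarrow> 's) \<Rightarrow> ('h \<Rightarrow> 's \<Rightarrow> 's) \<Rightarrow> ('h word \<Rightarrow> 's) set" where
  "ind_N sh Ph B ss rS = module.span (fsc ss) (ind_rels sh Ph B ss rS)"

(* q : R \<times> (T(hhat') (x) S) -> T(hhat') (x) T on representatives; it represents an even linear
   map Q : R (x) Ind(S) -> Ind(T) (via the universal property of (x)) satisfying (1) and (2);
   all equalities are in the quotient Ind(T), i.e. modulo ind_N for T. *)
definition is_Qf :: "(complex \<Rightarrow> 'h::ab_group_add \<Rightarrow> 'h) \<Rightarrow> ('h \<Rightarrow> 'h) \<Rightarrow> ('h \<Rightarrow> 'h \<Rightarrow> complex) \<Rightarrow>
    (complex \<Rightarrow> 'r::ab_group_add \<Rightarrow> 'r) \<Rightarrow> ('r \<Rightarrow> 'r) \<Rightarrow> ('h \<Rightarrow> 'r \<Rightarrow> 'r) \<Rightarrow>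
    (complex \<Rightarrow> 's::ab_group_add \<Rightarrow> 's) \<Rightarrow> ('s \<Rightarrow> 's) \<Rightarrow> ('h \<Rightarrow> 's \<Rightarrow> 's) \<Rightarrow>
    (complex \<Rightarrow> 't::ab_group_add \<Rightarrow> 't) \<Rightarrow> ('t \<Rightarrow> 't) \<Rightarrow> ('h \<Rightarrow> 't \<Rightarrow> 't) \<Rightarrow>
    ('r \<Rightarrow> 's \<Rightarrow> 't) \<Rightarrow> ('r \<Rightarrow> ('h word \<Rightarrow> 's) \<Rightarrow> ('h word \<Rightarrow> 't)) \<Rightarrow> bool" where
  "is_Qf sh Ph B sr Pr rR ss Ps rS st Pt rT f q \<longleftrightarrow>
    (let NS = ind_N sh Ph B ss rS; NT = ind_N sh Ph B st rT in
     (\<forall>r v. fin_supp v \<longrightarrow> fin_supp (q r v)) \<and>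
     (\<forall>r v v'. fin_supp v \<and> fin_supp v' \<and> v - v' \<in> NS \<longrightarrow> q r v - q r v' \<in> NT) \<and>
     (\<forall>c r r' v. fin_supp v \<longrightarrow> q (sr c r + r') v - (fsc st c (q r v) + q r' v) \<in> NT) \<and>
     (\<forall>c r v v'. fin_supp v \<and> fin_supp v' \<longrightarrow>
         q r (fsc ss c v + v') - (fsc st c (q r v) + q r v') \<in> NT) \<and>
     (\<forall>r v. fin_supp v \<longrightarrow> q (Pr r) (vpar Ph Ps v) - vpar Ph Pt (q r v) \<in> NT) \<and>
     (\<forall>r s. q r (tens [] s) - tens [] (f r s) \<in> NT) \<and>
     (\<forall>a m r v. fin_supp v \<longrightarrow>
         mode a m (q r v) - ((if m = 0 then q (rR a r) v else 0)
                               + q r (mode (even_part sh Ph a) m v)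
                               + q (Pr r) (mode (odd_part sh Ph a) m v)) \<in> NT))"

end

theory Submission
  imports Defs
begin



lemma addD:
  assumes "\<And>x y. g (x + y) = g x + (g y :: 'b::ab_group_add)"
  shows "g (0::'a::ab_group_add) = 0" "g (- x) = - g x" "g (x - y) = g x - g y"
proof -
  show z: "g 0 = 0" using assms[of 0 0] by simp
  have n: "\<And>x. g (- x) = - g x" using assms z by (metis add.right_inverse eq_neg_iff_add_eq_0)
  show "g (- x) = - g x" by (rule n)
  show "g (x - y) = g x - g y" using assms[of x "-y"] n[of y] by simp
qed

lemma sum_fun_apply: "(\<Sum>i\<in>A. F i) x = (\<Sum>i\<in>A. F i x)"
  by (induct A rule: infinite_finite_induct) auto

lemma linD:
  assumes "Vector_Spaces.linear s1 s2 g"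
  shows "g (x + y) = g x + g y" "g (s1 c x) = s2 c (g x)" "g 0 = 0" "g (- x) = - g x"
        "g (x - y) = g x - g y"
proof -
  interpret Vector_Spaces.linear s1 s2 g by fact
  have a: "\<And>x y. g (x + y) = g x + g y" by (rule add)
  show "g (x + y) = g x + g y" by (rule a)
  show "g (s1 c x) = s2 c (g x)" by (rule scale)
  show "g 0 = 0" "g (- x) = - g x" "g (x - y) = g x - g y" by (rule addD[OF a])+
qed

lemma vs_fsc:
  assumes "vector_space sc"
  shows "vector_space (fsc sc)"
proof -
  interpret V: vector_space sc by fact
  show ?thesis
    by unfold_locales (auto simp: fsc_def fun_eq_iff V.scale_right_distrib V.scale_left_distrib)
qed

locale L =
  fixes sh :: "complex \<Rightarrow> 'h::ab_group_add \<Rightarrow> 'h" and Ph :: "'h \<Rightarrow> 'h"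
    and B :: "'h \<Rightarrow> 'h \<Rightarrow> complex"
    and sr :: "complex \<Rightarrow> 'r::ab_group_add \<Rightarrow> 'r" and Pr :: "'r \<Rightarrow> 'r" and rR :: "'h \<Rightarrow> 'r \<Rightarrow> 'r"
    and ss :: "complex \<Rightarrow> 's::ab_group_add \<Rightarrow> 's" and Ps :: "'s \<Rightarrow> 's" and rS :: "'h \<Rightarrow> 's \<Rightarrow> 's"
    and st :: "complex \<Rightarrow> 't::ab_group_add \<Rightarrow> 't" and Pt :: "'t \<Rightarrow> 't" and rT :: "'h \<Rightarrow> 't \<Rightarrow> 't"
    and f :: "'r \<Rightarrow> 's \<Rightarrow> 't"
  assumes HD: "heis_data sh Ph B"
    and MR: "h_module sh Ph sr Pr rR"
    and MS: "h_module sh Ph ss Ps rS"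
    and MT: "h_module sh Ph st Pt rT"
    and IT: "even_intertwiner sh Ph sr Pr rR ss Ps rS st Pt rT f"
begin

lemma vsh: "vector_space sh" using HD unfolding heis_data_def super_vs_def by blast
lemma vsr: "vector_space sr" using MR unfolding h_module_def super_vs_def by blast
lemma vss: "vector_space ss" using MS unfolding h_module_def super_vs_def by blast
lemma vst: "vector_space st" using MT unfolding h_module_def super_vs_def by blast

sublocale VH: vector_space sh by (rule vsh)
sublocale VR: vector_space sr by (rule vsr)
sublocale VS: vector_space ss by (rule vss)
sublocale VT: vector_space st by (rule vst)
sublocale FS: vector_space "fsc ss" by (rule vs_fsc[OF vss])
sublocale FT: vector_space "fsc st" by (rule vs_fsc[OF vst])

lemma linPh: "Vector_Spaces.linear sh sh Ph" using HD unfolding heis_data_def super_vs_def by meson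
lemma PhPh[simp]: "Ph (Ph a) = a" using HD unfolding heis_data_def super_vs_def by meson
lemma linPr: "Vector_Spaces.linear sr sr Pr" using MR unfolding h_module_def super_vs_def by meson
lemma PrPr[simp]: "Pr (Pr r) = r" using MR unfolding h_module_def super_vs_def by meson
lemma linPs: "Vector_Spaces.linear ss ss Ps" using MS unfolding h_module_def super_vs_def by meson
lemma PsPs[simp]: "Ps (Ps x) = x" using MS unfolding h_module_def super_vs_def by meson
lemma linPt: "Vector_Spaces.linear st st Pt" using MT unfolding h_module_def super_vs_def by meson
lemma PtPt[simp]: "Pt (Pt x) = x" using MT unfolding h_module_def super_vs_def by meson

lemmas Ph_lin[simp] = linD[OF linPh]
lemmas Pr_lin[simp] = linD[OF linPr]
lemmas Ps_lin[simp] = linD[OF linPs]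
lemmas Pt_lin[simp] = linD[OF linPt]

lemma rR_lin_r: "Vector_Spaces.linear sr sr (rR a)" using MR unfolding h_module_def by meson
lemma rR_lin_a: "Vector_Spaces.linear sh sr (\<lambda>a. rR a r)" using MR unfolding h_module_def by meson
lemma rS_lin_r: "Vector_Spaces.linear ss ss (rS a)" using MS unfolding h_module_def by meson
lemma rS_lin_a: "Vector_Spaces.linear sh ss (\<lambda>a. rS a r)" using MS unfolding h_module_def by meson
lemma rT_lin_r: "Vector_Spaces.linear st st (rT a)" using MT unfolding h_module_def by meson
lemma rT_lin_a: "Vector_Spaces.linear sh st (\<lambda>a. rT a r)" using MT unfolding h_module_def by meson
lemma rR_par: "Pr (rR a r) = rR (Ph a) (Pr r)" using MR unfolding h_module_def by meson
lemma rR_comm: "homog Ph a \<Longrightarrow> homog Ph b \<Longrightarrow> rR a (rR b r) = sr (ksign Ph a b) (rR b (rR a r))"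
  using MR unfolding h_module_def by meson
lemma rT_comm: "homog Ph a \<Longrightarrow> homog Ph b \<Longrightarrow> rT a (rT b r) = st (ksign Ph a b) (rT b (rT a r))"
  using MT unfolding h_module_def by meson

lemmas rR_r[simp] = linD[OF rR_lin_r]
lemmas rS_r[simp] = linD[OF rS_lin_r]
lemmas rT_r[simp] = linD[OF rT_lin_r]
lemma rR_a[simp]: "rR (x + y) r = rR x r + rR y r" "rR (sh c x) r = sr c (rR x r)" "rR 0 r = 0"
   "rR (- x) r = - rR x r" "rR (x - y) r = rR x r - rR y r"
  using linD[OF rR_lin_a[of r]] by auto
lemma rS_a[simp]: "rS (x + y) r = rS x r + rS y r" "rS (sh c x) r = ss c (rS x r)" "rS 0 r = 0"
   "rS (- x) r = - rS x r" "rS (x - y) r = rS x r - rS y r"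
  using linD[OF rS_lin_a[of r]] by auto
lemma rT_a[simp]: "rT (x + y) r = rT x r + rT y r" "rT (sh c x) r = st c (rT x r)" "rT 0 r = 0"
   "rT (- x) r = - rT x r" "rT (x - y) r = rT x r - rT y r"
  using linD[OF rT_lin_a[of r]] by auto


lemma f_lin_r: "Vector_Spaces.linear sr st (\<lambda>r. f r s)" using IT unfolding even_intertwiner_def by meson
lemma f_lin_s: "Vector_Spaces.linear ss st (f r)" using IT unfolding even_intertwiner_def by meson
lemma f_par: "Pt (f r s) = f (Pr r) (Ps s)" using IT unfolding even_intertwiner_def by meson
lemma f_int: "rT a (f r s) = f (rR a r) s + f r (rS (even_part sh Ph a) s) + f (Pr r) (rS (odd_part sh Ph a) s)"
  using IT unfolding even_intertwiner_def by meson

lemma f_r[simp]: "f (x + y) s = f x s + f y s" "f (sr c x) s = st c (f x s)" "f 0 s = 0"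
   "f (- x) s = - f x s" "f (x - y) s = f x s - f y s"
  using linD[OF f_lin_r[of s]] by auto
lemmas f_s[simp] = linD[OF f_lin_s]

end




lemma mode_add[simp]: "mode a m (X + Y) = mode a m X + mode a m (Y :: 'h word \<Rightarrow> 't::ab_group_add)"
  by (auto simp: mode_def fun_eq_iff split: list.splits)
lemma mode_zero[simp]: "mode a m (0 :: 'h word \<Rightarrow> 't::ab_group_add) = 0"
  by (auto simp: mode_def fun_eq_iff split: list.splits)
lemma mode_neg[simp]: "mode a m (- X) = - mode a m (X :: 'h word \<Rightarrow> 't::ab_group_add)"
  by (auto simp: mode_def fun_eq_iff split: list.splits)
lemma mode_diff[simp]: "mode a m (X - Y) = mode a m X - mode a m (Y :: 'h word \<Rightarrow> 't::ab_group_add)"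
  by (auto simp: mode_def fun_eq_iff split: list.splits)
lemma mode_sum: "mode a m (\<Sum>i\<in>A. X i) = (\<Sum>i\<in>A. mode a m (X i :: 'h word \<Rightarrow> 't::ab_group_add))"
proof (induct A rule: infinite_finite_induct)
  case (insert x F) then show ?case by (metis sum.insert mode_add)
qed (simp_all add: mode_def zero_fun_def fun_eq_iff split: list.splits)
lemma mode_tens: "mode a m (tens w s) = tens ((a, m) # w) (s :: 't::ab_group_add)"
  by (auto simp: mode_def tens_def fun_eq_iff split: list.splits)
lemma mode_fsc: "sc c 0 = 0 \<Longrightarrow> mode a m (fsc sc c X) = fsc sc c (mode a m (X :: 'h word \<Rightarrow> 't::ab_group_add))"
  by (auto simp: mode_def fsc_def fun_eq_iff split: list.splits)

lemma tens_add: "tens w (s + s') = tens w s + tens w (s' :: 't::ab_group_add)"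
  by (auto simp: tens_def fun_eq_iff)
lemma tens_zero[simp]: "tens w (0 :: 't::ab_group_add) = 0"
  by (auto simp: tens_def fun_eq_iff)
lemma tens_neg: "tens w (- s) = - tens w (s :: 't::ab_group_add)"
  by (auto simp: tens_def fun_eq_iff)
lemma tens_diff: "tens w (s - s') = tens w s - tens w (s' :: 't::ab_group_add)"
  by (auto simp: tens_def fun_eq_iff)
lemma tens_sum: "tens w (\<Sum>i\<in>A. X i) = (\<Sum>i\<in>A. tens w (X i :: 't::ab_group_add))"
proof (induct A rule: infinite_finite_induct)
  case (insert x F) then show ?case by (metis sum.insert tens_add)
qed simp_all
lemma fsc_tens: "sc c 0 = 0 \<Longrightarrow> fsc sc c (tens w s) = tens w (sc c (s::'t::ab_group_add))"
  by (auto simp: tens_def fsc_def fun_eq_iff)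

lemma fin_supp_tens[simp]: "fin_supp (tens w (s::'t::ab_group_add))"
proof -
  have "{u. tens w s u \<noteq> 0} \<subseteq> {w}" by (auto simp: tens_def)
  then show ?thesis unfolding fin_supp_def using finite_subset by blast
qed
lemma fin_supp_zero[simp]: "fin_supp (0 :: 'w \<Rightarrow> 't::ab_group_add)"
  by (simp add: fin_supp_def)
lemma fin_supp_add[simp]: "fin_supp X \<Longrightarrow> fin_supp Y \<Longrightarrow> fin_supp (X + (Y :: 'w \<Rightarrow> 't::ab_group_add))"
proof -
  assume a: "fin_supp X" "fin_supp Y"
  have "{u. (X + Y) u \<noteq> 0} \<subseteq> {u. X u \<noteq> 0} \<union> {u. Y u \<noteq> 0}" by auto
  then show ?thesis using a unfolding fin_supp_def using finite_subset by blast
qed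
lemma fin_supp_neg[simp]: "fin_supp (- X) = fin_supp (X :: 'w \<Rightarrow> 't::ab_group_add)"
  by (simp add: fin_supp_def)
lemma fin_supp_diff[simp]: "fin_supp X \<Longrightarrow> fin_supp Y \<Longrightarrow> fin_supp (X - (Y :: 'w \<Rightarrow> 't::ab_group_add))"
  using fin_supp_add[of X "- Y"] by simp
lemma fin_supp_sum[simp]: "(\<And>i. i \<in> A \<Longrightarrow> fin_supp (X i)) \<Longrightarrow> fin_supp (\<Sum>i\<in>A. X i :: 'w \<Rightarrow> 't::ab_group_add)"
  by (induct A rule: infinite_finite_induct) auto
lemma fin_supp_fsc[simp]: "sc c 0 = 0 \<Longrightarrow> fin_supp X \<Longrightarrow> fin_supp (fsc sc c (X :: 'w \<Rightarrow> 't::ab_group_add))"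
proof -
  assume a: "sc c 0 = 0" "fin_supp X"
  have "{u. fsc sc c X u \<noteq> 0} \<subseteq> {u. X u \<noteq> 0}" using a(1) by (auto simp: fsc_def)
  then show ?thesis using a unfolding fin_supp_def using finite_subset by blast
qed

lemma decomp:
  assumes "fin_supp (v :: 'h word \<Rightarrow> 't::ab_group_add)"
  shows "v = (\<Sum>u\<in>{u. v u \<noteq> 0}. tens u (v u))"
proof (rule ext)
  fix x
  have fin: "finite {u. v u \<noteq> 0}" using assms by (simp add: fin_supp_def)
  have "(\<Sum>u\<in>{u. v u \<noteq> 0}. tens u (v u)) x = (\<Sum>u\<in>{u. v u \<noteq> 0}. tens u (v u) x)"
    by (rule sum_fun_apply)
  also have "\<dots> = (\<Sum>u\<in>{u. v u \<noteq> 0}. if x = u then v u else 0)"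
    by (simp add: tens_def)
  also have "\<dots> = v x" using fin by (simp add: sum.delta')
  finally show "v x = (\<Sum>u\<in>{u. v u \<noteq> 0}. tens u (v u)) x" by simp
qed

lemma fin_supp_mode[simp]: "fin_supp X \<Longrightarrow> fin_supp (mode a m (X :: 'h word \<Rightarrow> 't::ab_group_add))"
proof -
  assume a: "fin_supp X"
  have "mode a m X = (\<Sum>u\<in>{u. X u \<noteq> 0}. tens ((a,m)#u) (X u))"
    by (subst decomp[OF a]) (simp add: mode_sum mode_tens)
  then show ?thesis by simp
qed

context L begin

abbreviation ea where "ea a \<equiv> even_part sh Ph a"
abbreviation oa where "oa a \<equiv> odd_part sh Ph a"

lemma two_half: "sh (1/2) (x + x) = x"
proof -
  have "x + x = sh 2 x" using VH.scale_left_distrib[of 1 1 x] by simp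
  then show ?thesis by simp
qed

lemma ea_oa: "ea a + oa a = a"
proof -
  have "ea a + oa a = sh (1/2) ((a + Ph a) + (a - Ph a))"
    unfolding even_part_def odd_part_def VH.scale_right_distrib[symmetric] ..
  also have "(a + Ph a) + (a - Ph a) = a + a" by simp
  finally show ?thesis using two_half by simp
qed

lemma Ph_ea[simp]: "Ph (ea a) = ea a"
  by (simp add: even_part_def add.commute)
lemma Ph_oa[simp]: "Ph (oa a) = - oa a"
  by (simp add: odd_part_def VH.scale_right_diff_distrib)

lemma even_parts: "Ph x = x \<Longrightarrow> ea x = x \<and> oa x = 0"
  by (simp add: even_part_def odd_part_def two_half)
lemma odd_parts: "Ph x = - x \<Longrightarrow> ea x = 0 \<and> oa x = x"
  by (simp add: even_part_def odd_part_def two_half)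

lemma ea_ea[simp]: "ea (ea a) = ea a" and oa_ea[simp]: "oa (ea a) = 0"
  using even_parts[OF Ph_ea[of a]] by auto
lemma ea_oa'[simp]: "ea (oa a) = 0" and oa_oa[simp]: "oa (oa a) = oa a"
  using odd_parts[OF Ph_oa[of a]] by auto

lemma ea_Ph[simp]: "ea (Ph a) = ea a"
  by (simp add: even_part_def add.commute)
lemma oa_Ph[simp]: "oa (Ph a) = - oa a"
  by (simp add: odd_part_def VH.scale_right_diff_distrib)

lemma ea_lin[simp]: "ea (x + y) = ea x + ea y" "ea (sh c x) = sh c (ea x)" "ea 0 = 0" "ea (- x) = - ea x"
  by (simp_all add: even_part_def VH.scale_right_distrib VH.scale_left_commute algebra_simps)
lemma oa_lin[simp]: "oa (x + y) = oa x + oa y" "oa (sh c x) = sh c (oa x)" "oa 0 = 0" "oa (- x) = - oa x"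
  by (simp_all add: odd_part_def VH.scale_right_distrib VH.scale_right_diff_distrib VH.scale_left_commute algebra_simps)

end



lemma rel1_in: "tens (ws @ (sh c a + b, m) # wt) s - fsc sc c (tens (ws @ (a, m) # wt) s) - tens (ws @ (b, m) # wt) s
   \<in> ind_rels sh Ph B sc rho"
  unfolding ind_rels_def
  apply (rule UnI1)+ apply (rule CollectI) apply (intro exI conjI) apply (rule refl) apply (rule TrueI) done
lemma rel2_in: "homog Ph a \<Longrightarrow> homog Ph b \<Longrightarrow>
   tens (ws @ (a, m) # (b, n) # wt) s - tens (ws @ (b, n) # (a, m) # wt) (sc (ksign Ph a b) s)
        - tens (ws @ wt) (sc (of_int m * (if m + n = 0 then B a b else 0)) s) \<in> ind_rels sh Ph B sc rho"
  unfolding ind_rels_def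
  apply (rule UnI1, rule UnI1, rule UnI2) apply (rule CollectI) apply (intro exI conjI) apply (rule refl) by assumption+
lemma rel3_in: "m > 0 \<Longrightarrow> tens (w @ [(a, m)]) s \<in> ind_rels sh Ph B sc rho"
  unfolding ind_rels_def
  apply (rule UnI1, rule UnI2) apply (rule CollectI) apply (intro exI conjI) apply (rule refl) by assumption
lemma rel4_in: "tens (w @ [(a, 0)]) s - tens w (rho a s) \<in> ind_rels sh Ph B sc rho"
  unfolding ind_rels_def
  apply (rule UnI2) apply (rule CollectI) apply (intro exI conjI) apply (rule refl) by (rule TrueI)

context L begin

abbreviation NT where "NT \<equiv> ind_N sh Ph B st rT"
abbreviation NS where "NS \<equiv> ind_N sh Ph B ss rS"

lemma NT_add: "x \<in> NT \<Longrightarrow> y \<in> NT \<Longrightarrow> x + y \<in> NT" unfolding ind_N_def by (rule FT.span_add)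
lemma NT_diff: "x \<in> NT \<Longrightarrow> y \<in> NT \<Longrightarrow> x - y \<in> NT" unfolding ind_N_def by (rule FT.span_diff)
lemma NT_neg: "x \<in> NT \<Longrightarrow> - x \<in> NT" unfolding ind_N_def by (rule FT.span_neg)
lemma NT_zero: "0 \<in> NT" unfolding ind_N_def by (rule FT.span_zero)
lemma NT_fsc: "x \<in> NT \<Longrightarrow> fsc st c x \<in> NT" unfolding ind_N_def by (rule FT.span_scale)
lemma NT_sum: "(\<And>i. i \<in> A \<Longrightarrow> X i \<in> NT) \<Longrightarrow> (\<Sum>i\<in>A. X i) \<in> NT" unfolding ind_N_def by (rule FT.span_sum)
lemma NT_base: "x \<in> ind_rels sh Ph B st rT \<Longrightarrow> x \<in> NT" unfolding ind_N_def by (rule FT.span_base)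

lemma NS_add: "x \<in> NS \<Longrightarrow> y \<in> NS \<Longrightarrow> x + y \<in> NS" unfolding ind_N_def by (rule FS.span_add)
lemma NS_diff: "x \<in> NS \<Longrightarrow> y \<in> NS \<Longrightarrow> x - y \<in> NS" unfolding ind_N_def by (rule FS.span_diff)
lemma NS_zero: "0 \<in> NS" unfolding ind_N_def by (rule FS.span_zero)
lemma NS_sum: "(\<And>i. i \<in> A \<Longrightarrow> X i \<in> NS) \<Longrightarrow> (\<Sum>i\<in>A. X i) \<in> NS" unfolding ind_N_def by (rule FS.span_sum)
lemma NS_base: "x \<in> ind_rels sh Ph B ss rS \<Longrightarrow> x \<in> NS" unfolding ind_N_def by (rule FS.span_base)

lemma rels_mode_T: "x \<in> ind_rels sh Ph B st rT \<Longrightarrow> mode a k x \<in> ind_rels sh Ph B st rT"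
proof -
  assume "x \<in> ind_rels sh Ph B st rT"
  then consider
      (1) w1 w2 c a' b m s where "x = tens (w1 @ (sh c a' + b, m) # w2) s - fsc st c (tens (w1 @ (a', m) # w2) s) - tens (w1 @ (b, m) # w2) s"
    | (2) w1 w2 a' b m n s where "homog Ph a'" "homog Ph b" "x = tens (w1 @ (a', m) # (b, n) # w2) s - tens (w1 @ (b, n) # (a', m) # w2) (st (ksign Ph a' b) s)
        - tens (w1 @ w2) (st (of_int m * (if m + n = 0 then B a' b else 0)) s)"
    | (3) w a' m s where "m > 0" "x = tens (w @ [(a', m)]) s"
    | (4) w a' s where "x = tens (w @ [(a', 0)]) s - tens w (rT a' s)"
    unfolding ind_rels_def by fast
  then show ?thesis
  proof cases
    case 1 then show ?thesis using rel1_in[where ws="(a,k)#w1"] by (simp add: mode_tens mode_fsc)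
  next
    case 2
    have eq: "mode a k x = tens (((a,k)#w1) @ (a', m) # (b, n) # w2) s - tens (((a,k)#w1) @ (b, n) # (a', m) # w2) (st (ksign Ph a' b) s)
        - tens (((a,k)#w1) @ w2) (st (of_int m * (if m + n = 0 then B a' b else 0)) s)"
      using 2(3) by (simp only: mode_diff mode_tens append_Cons)
    show ?thesis unfolding eq by (rule rel2_in[OF 2(1,2)])
  next
    case 3 then show ?thesis using rel3_in[where w="(a,k)#w"] by (simp add: mode_tens)
  next
    case 4 then show ?thesis using rel4_in[where w="(a,k)#w"] by (simp add: mode_tens)
  qed
qed

lemma NT_mode: "x \<in> NT \<Longrightarrow> mode a k x \<in> NT"
  unfolding ind_N_def
proof (erule FT.span_induct_alt)
  show "mode a k 0 \<in> FT.span (ind_rels sh Ph B st rT)" by (simp add: FT.span_zero)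
next
  fix c x y assume step: "x \<in> ind_rels sh Ph B st rT" "mode a k y \<in> FT.span (ind_rels sh Ph B st rT)"
  have "mode a k (fsc st c x + y) = fsc st c (mode a k x) + mode a k y"
    by (simp add: mode_fsc)
  then show "mode a k (fsc st c x + y) \<in> FT.span (ind_rels sh Ph B st rT)"
    using step rels_mode_T[OF step(1)]
    by (simp add: FT.span_add FT.span_scale FT.span_base)
qed

lemma fsc_add[simp]: "fsc st c (X + Y) = fsc st c X + fsc st c Y"
  by (rule FT.scale_right_distrib)
lemma fsc_neg[simp]: "fsc st c (- X) = - fsc st c X"
  by (rule FT.scale_minus_right)
lemma fsc_diff[simp]: "fsc st c (X - Y) = fsc st c X - fsc st c Y"
  by (rule FT.scale_right_diff_distrib)
lemma fsc_zero[simp]: "fsc st c 0 = 0"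
  by (rule FT.scale_zero_right)
lemma fsc_one[simp]: "fsc st 1 X = X"
  by (rule FT.scale_one)
lemma fsc_m1[simp]: "fsc st (-1) X = - X"
  using FT.scale_minus_left[of 1 X] by simp

lemma fin_fsc_t[simp]: "fin_supp X \<Longrightarrow> fin_supp (fsc st c X)"
  by (rule fin_supp_fsc) simp
lemma fin_fsc_s[simp]: "fin_supp X \<Longrightarrow> fin_supp (fsc ss c X)"
  by (rule fin_supp_fsc) simp

lemma L1: assumes "fin_supp X"
  shows "mode (sh c a + b) m X - fsc st c (mode a m X) - mode b m X \<in> NT"
proof -
  let ?A = "{u. X u \<noteq> 0}"
  have "mode (sh c a + b) m X - fsc st c (mode a m X) - mode b m X =
     (\<Sum>u\<in>?A. tens ((sh c a + b, m) # u) (X u) - fsc st c (tens ((a, m) # u) (X u)) - tens ((b, m) # u) (X u))"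
    apply (subst (1 2 3) decomp[OF assms])
    by (simp add: mode_sum mode_tens FT.scale_sum_right sum_subtractf)
  also have "\<dots> \<in> NT"
    using rel1_in[where ws="[]" and sc = st and rho = rT] by (intro NT_sum NT_base) simp
  finally show ?thesis .
qed

lemma L2: assumes "fin_supp X" "homog Ph a" "homog Ph b"
  shows "mode a m (mode b n X) - fsc st (ksign Ph a b) (mode b n (mode a m X))
     - fsc st (of_int m * (if m + n = 0 then B a b else 0)) X \<in> NT"
proof -
  let ?A = "{u. X u \<noteq> 0}"
  have "mode a m (mode b n X) - fsc st (ksign Ph a b) (mode b n (mode a m X))
     - fsc st (of_int m * (if m + n = 0 then B a b else 0)) X =
     (\<Sum>u\<in>?A. tens ([] @ (a, m) # (b, n) # u) (X u) - tens ([] @ (b, n) # (a, m) # u) (st (ksign Ph a b) (X u))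
        - tens ([] @ u) (st (of_int m * (if m + n = 0 then B a b else 0)) (X u)))"
    apply (subst (1 2 3) decomp[OF assms(1)])
    by (simp add: mode_sum mode_tens FT.scale_sum_right sum_subtractf fsc_tens)
  also have "\<dots> \<in> NT"
    using rel2_in[OF assms(2,3), where m=m and n=n and ws="[]" and sc = st and rho = rT] by (intro NT_sum NT_base) simp
  finally show ?thesis .
qed

lemma L0: assumes "fin_supp X" shows "mode 0 m X \<in> NT"
proof -
  have "mode (sh 1 0 + 0) m X - fsc st 1 (mode 0 m X) - mode 0 m X \<in> NT" by (rule L1[OF assms])
  then have "- mode 0 m X \<in> NT" by simp
  then show ?thesis using NT_neg by fastforce
qed

lemma L3: "m > 0 \<Longrightarrow> tens [(a, m)] t \<in> NT"
  using rel3_in[where w="[]" and sc = st and rho = rT] by (intro NT_base) simp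
lemma L4: "tens [(a, 0)] t - tens [] (rT a t) \<in> NT"
  using rel4_in[where w="[]" and sc = st and rho = rT] by (intro NT_base) simp

end



context L begin

definition lin_r :: "('r \<Rightarrow> 'h word \<Rightarrow> 't) \<Rightarrow> bool" where
  "lin_r F \<longleftrightarrow> (\<forall>r r'. F (r + r') = F r + F r') \<and> (\<forall>c r. F (sr c r) = fsc st c (F r))"

lemma lin_rD:
  assumes "lin_r F"
  shows "F (r + r') = F r + F r'" "F (sr c r) = fsc st c (F r)" "F 0 = 0" "F (- r) = - F r"
    "F (r - r') = F r - F r'"
proof -
  have a: "\<And>x y. F (x + y) = F x + F y" using assms by (simp add: lin_r_def)
  show "F (r + r') = F r + F r'" by (rule a)
  show "F (sr c r) = fsc st c (F r)" using assms by (simp add: lin_r_def)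
  show "F 0 = 0" "F (- r) = - F r" "F (r - r') = F r - F r'" by (rule addD[OF a])+
qed

definition step :: "'h \<times> int \<Rightarrow> ('r \<Rightarrow> 'h word \<Rightarrow> 't) \<Rightarrow> 'r \<Rightarrow> 'h word \<Rightarrow> 't" where
  "step x F r = (case x of (a, m) \<Rightarrow>
     mode (ea a) m (F r) - (if m = 0 then F (rR (ea a) r) else 0)
     + mode (oa a) m (F (Pr r)) - (if m = 0 then F (rR (oa a) (Pr r)) else 0))"

lemma step_simp: "step (a, m) F r =
     mode (ea a) m (F r) - (if m = 0 then F (rR (ea a) r) else 0)
     + mode (oa a) m (F (Pr r)) - (if m = 0 then F (rR (oa a) (Pr r)) else 0)"
  by (simp add: step_def)

lemma step_add: "step x (\<lambda>r. F r + G r) r = step x F r + step x G r"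
  by (cases x) (simp add: step_simp algebra_simps)
lemma step_neg: "step x (\<lambda>r. - F r) r = - step x F r"
  by (cases x) (simp add: step_simp algebra_simps)
lemma step_diff: "step x (\<lambda>r. F r - G r) r = step x F r - step x G r"
  by (cases x) (simp add: step_simp algebra_simps)
lemma step_fsc: "step x (\<lambda>r. fsc st c (F r)) r = fsc st c (step x F r)"
  by (cases x) (simp add: step_simp algebra_simps mode_fsc)
lemma step_zero: "step x (\<lambda>r. 0) r = 0"
  by (cases x) (simp add: step_simp)

lemma step_NT: "(\<And>r. F r \<in> NT) \<Longrightarrow> step x F r \<in> NT"
  by (cases x) (auto simp: step_simp intro!: NT_add NT_diff NT_mode NT_zero)

lemma step_cong: "(\<And>r. F r - G r \<in> NT) \<Longrightarrow> step x F r - step x G r \<in> NT"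
  using step_NT[of "\<lambda>r. F r - G r" x r] by (simp add: step_diff)

lemma step_fin: "(\<And>r. fin_supp (F r)) \<Longrightarrow> fin_supp (step x F r)"
  by (cases x) (auto simp: step_simp)

lemma lin_r_step: assumes "lin_r F" shows "lin_r (\<lambda>r. step x F r)"
proof (cases x)
  case (Pair a m)
  note F = lin_rD[OF assms]
  show ?thesis unfolding lin_r_def Pair step_simp
    by (simp add: F mode_fsc algebra_simps)
qed

primrec Qw :: "'h word \<Rightarrow> 'r \<Rightarrow> 's \<Rightarrow> 'h word \<Rightarrow> 't" where
  "Qw [] r s = tens [] (f r s)"
| "Qw (x # w) r s = step x (\<lambda>r'. Qw w r' s) r"

lemma lin_Qw: "lin_r (\<lambda>r. Qw w r s)"
proof (induct w)
  case Nil then show ?case by (simp add: lin_r_def tens_add fsc_tens)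
next
  case (Cons x w) then show ?case by (simp add: lin_r_step)
qed

lemmas Qw_r[simp] = lin_rD[OF lin_Qw]

lemma Qw_add_s_all: "\<forall>r. Qw w r (s + s') = Qw w r s + Qw w r s'"
  apply (rule list.induct[of "\<lambda>w. \<forall>r. Qw w r (s + s') = Qw w r s + Qw w r s'"])
   apply (simp add: tens_add)
  apply (simp add: step_add)
  done
lemma Qw_add_s: "Qw w r (s + s') = Qw w r s + Qw w r s'"
  using Qw_add_s_all by blast

lemma Qw_fsc_s: "Qw w r (ss c s) = fsc st c (Qw w r s)"
proof (induct w arbitrary: r)
  case Nil then show ?case by (simp add: fsc_tens)
next
  case (Cons x w) then show ?case by (simp add: step_fsc)
qed

lemma Qw_s[simp]: "Qw w r 0 = 0" "Qw w r (- s) = - Qw w r s" "Qw w r (s - s') = Qw w r s - Qw w r s'"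
  by (rule addD[of "Qw w r", OF Qw_add_s])+

lemma Qw_fin[simp]: "fin_supp (Qw w r s)"
proof (induct w arbitrary: r)
  case Nil then show ?case by simp
next
  case (Cons x w) then show ?case by (simp add: step_fin)
qed

end


context L begin
definition qq :: "'r \<Rightarrow> ('h word \<Rightarrow> 's) \<Rightarrow> 'h word \<Rightarrow> 't" where
  "qq r v = (\<Sum>u\<in>{u. v u \<noteq> 0}. Qw u r (v u))"

lemma qq_superset: "finite A \<Longrightarrow> {u. v u \<noteq> 0} \<subseteq> A \<Longrightarrow> qq r v = (\<Sum>u\<in>A. Qw u r (v u))"
  unfolding qq_def by (rule sum.mono_neutral_left) auto

lemma qq_add: assumes "fin_supp v" "fin_supp v'" shows "qq r (v + v') = qq r v + qq r v'"
proof -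
  let ?A = "{u. v u \<noteq> 0} \<union> {u. v' u \<noteq> 0}"
  have fin: "finite ?A" using assms by (simp add: fin_supp_def)
  have "qq r (v + v') = (\<Sum>u\<in>?A. Qw u r ((v + v') u))" by (rule qq_superset[OF fin]) auto
  also have "\<dots> = (\<Sum>u\<in>?A. Qw u r (v u + v' u))" by simp
  also have "\<dots> = (\<Sum>u\<in>?A. Qw u r (v u)) + (\<Sum>u\<in>?A. Qw u r (v' u))" by (simp add: Qw_add_s sum.distrib)
  also have "\<dots> = qq r v + qq r v'"
    by (simp add: qq_superset[OF fin, symmetric])
  finally show ?thesis .
qed

lemma qq_zero[simp]: "qq r 0 = 0" by (simp add: qq_def)

lemma qq_neg: assumes "fin_supp v" shows "qq r (- v) = - qq r v"
proof -
  have "qq r v + qq r (- v) = 0" using qq_add[OF assms, of "- v"] assms by simp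
  from minus_unique[OF this] show ?thesis by simp
qed
lemma qq_diff: assumes "fin_supp v" "fin_supp v'" shows "qq r (v - v') = qq r v - qq r v'"
  using qq_add[OF assms(1), of "- v'"] qq_neg[OF assms(2)] assms by simp

lemma qq_fsc: assumes "fin_supp v" shows "qq r (fsc ss c v) = fsc st c (qq r v)"
proof -
  let ?A = "{u. v u \<noteq> 0}"
  have fin: "finite ?A" using assms by (simp add: fin_supp_def)
  have "qq r (fsc ss c v) = (\<Sum>u\<in>?A. Qw u r (fsc ss c v u))"
    by (rule qq_superset[OF fin]) (auto simp: fsc_def)
  also have "\<dots> = (\<Sum>u\<in>?A. Qw u r (ss c (v u)))" by (simp add: fsc_def)
  also have "\<dots> = fsc st c (qq r v)"
    by (simp add: Qw_fsc_s qq_def FT.scale_sum_right)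
  finally show ?thesis .
qed

lemma qq_tens[simp]: "qq r (tens w s) = Qw w r s"
proof -
  have "qq r (tens w s) = (\<Sum>u\<in>{w}. Qw u r (tens w s u))"
    by (rule qq_superset) (auto simp: tens_def)
  then show ?thesis by (simp add: tens_def)
qed

lemma qq_sum: assumes "\<And>i. i \<in> I \<Longrightarrow> fin_supp (X i)" shows "qq r (sum X I) = (\<Sum>i\<in>I. qq r (X i))"
proof (cases "finite I")
  case False then show ?thesis by simp
next
  case True
  have "(\<forall>i\<in>J. fin_supp (X i)) \<longrightarrow> qq r (sum X J) = (\<Sum>i\<in>J. qq r (X i))" if "finite J" for J
    using that
  proof (rule finite_induct)
    show "(\<forall>i\<in>{}. fin_supp (X i)) \<longrightarrow> qq r (sum X {}) = (\<Sum>i\<in>{}. qq r (X i))" by simp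
  next
    fix x F assume fin: "finite F" and nx: "x \<notin> F"
      and IH: "(\<forall>i\<in>F. fin_supp (X i)) \<longrightarrow> qq r (sum X F) = (\<Sum>i\<in>F. qq r (X i))"
    show "(\<forall>i\<in>insert x F. fin_supp (X i)) \<longrightarrow> qq r (sum X (insert x F)) = (\<Sum>i\<in>insert x F. qq r (X i))"
    proof
      assume a: "\<forall>i\<in>insert x F. fin_supp (X i)"
      have "qq r (sum X (insert x F)) = qq r (X x + sum X F)" using fin nx by simp
      also have "\<dots> = qq r (X x) + qq r (sum X F)" by (rule qq_add) (use a in auto)
      also have "\<dots> = qq r (X x) + (\<Sum>i\<in>F. qq r (X i))" using IH a by simp
      also have "\<dots> = (\<Sum>i\<in>insert x F. qq r (X i))" using fin nx by simp
      finally show "qq r (sum X (insert x F)) = (\<Sum>i\<in>insert x F. qq r (X i))" .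
    qed
  qed
  then show ?thesis using True assms by blast
qed

lemma qq_fin[simp]: "fin_supp (qq r v)"
  by (simp add: qq_def)

lemma qq_r: "qq (r + r') v = qq r v + qq r' v" "qq (sr c r) v = fsc st c (qq r v)"
  by (simp_all add: qq_def sum.distrib FT.scale_sum_right)
lemma qq_r0[simp]: "qq 0 v = 0" by (simp add: qq_def)

end



context L begin

lemma prefix:
  assumes "\<And>x w r. D r (x # w) = step x (\<lambda>r. D r w) r" and "\<And>r. D r [] \<in> NT"
  shows "D r w \<in> NT"
proof (induct w arbitrary: r)
  case Nil then show ?case by (rule assms(2))
next
  case (Cons x w) then show ?case unfolding assms(1) by (intro step_NT)
qed

lemma R1_base: "Qw ((sh c a + b, m) # w2) r s - fsc st c (Qw ((a, m) # w2) r s) - Qw ((b, m) # w2) r s \<in> NT"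
proof -
  let ?F = "\<lambda>r. Qw w2 r s"
  have e1: "mode (sh c (ea a) + ea b) m (?F r) - fsc st c (mode (ea a) m (?F r)) - mode (ea b) m (?F r) \<in> NT"
    by (rule L1) simp
  have e2: "mode (sh c (oa a) + oa b) m (?F (Pr r)) - fsc st c (mode (oa a) m (?F (Pr r))) - mode (oa b) m (?F (Pr r)) \<in> NT"
    by (rule L1) simp
  have "Qw ((sh c a + b, m) # w2) r s - fsc st c (Qw ((a, m) # w2) r s) - Qw ((b, m) # w2) r s
      = (mode (sh c (ea a) + ea b) m (?F r) - fsc st c (mode (ea a) m (?F r)) - mode (ea b) m (?F r))
      + (mode (sh c (oa a) + oa b) m (?F (Pr r)) - fsc st c (mode (oa a) m (?F (Pr r))) - mode (oa b) m (?F (Pr r)))"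
    by (cases "m = 0") (simp_all add: step_simp algebra_simps)
  then show ?thesis using NT_add[OF e1 e2] by simp
qed

lemma R1: "Qw (w1 @ (sh c a + b, m) # w2) r s - fsc st c (Qw (w1 @ (a, m) # w2) r s) - Qw (w1 @ (b, m) # w2) r s \<in> NT"
  by (rule prefix[where D = "\<lambda>r w1. Qw (w1 @ (sh c a + b, m) # w2) r s - fsc st c (Qw (w1 @ (a, m) # w2) r s) - Qw (w1 @ (b, m) # w2) r s"])
     (simp_all add: step_diff step_fsc R1_base[simplified])

lemma R3_base: "m > 0 \<Longrightarrow> Qw [(a, m)] r s \<in> NT"
  by (simp add: step_simp mode_tens L3 NT_add)

lemma R3: "m > 0 \<Longrightarrow> Qw (w @ [(a, m)]) r s \<in> NT"
  by (rule prefix[where D = "\<lambda>r w. Qw (w @ [(a, m)]) r s"]) (simp_all add: R3_base[simplified])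

lemma rS_split: "rS a s = rS (ea a) s + rS (oa a) s"
  using rS_a(1)[of "ea a" "oa a" s] ea_oa[of a] by simp

lemma R4_base: "Qw [(a, 0)] r s - Qw [] r (rS a s) \<in> NT"
proof -
  have e1: "tens [(ea a, 0)] (f r s) - tens [] (rT (ea a) (f r s)) \<in> NT" by (rule L4)
  have e2: "tens [(oa a, 0)] (f (Pr r) s) - tens [] (rT (oa a) (f (Pr r) s)) \<in> NT" by (rule L4)
  have "Qw [(a, 0)] r s - Qw [] r (rS a s) =
     (tens [(ea a, 0)] (f r s) - tens [] (rT (ea a) (f r s))) + (tens [(oa a, 0)] (f (Pr r) s) - tens [] (rT (oa a) (f (Pr r) s)))"
    apply (simp add: step_simp mode_tens)
    apply (subst rS_split)
    apply (simp add: f_int tens_add tens_diff algebra_simps)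
    done
  then show ?thesis using NT_add[OF e1 e2] by simp
qed

lemma R4: "Qw (w @ [(a, 0)]) r s - Qw w r (rS a s) \<in> NT"
  by (rule prefix[where D = "\<lambda>r w. Qw (w @ [(a, 0)]) r s - Qw w r (rS a s)"])
     (simp_all add: step_diff R4_base[simplified])

end



context L begin

definition hop :: "'h \<Rightarrow> int \<Rightarrow> ('r \<Rightarrow> 'h word \<Rightarrow> 't) \<Rightarrow> 'r \<Rightarrow> 'h word \<Rightarrow> 't" where
  "hop a m F r = (if Ph a = - a then mode a m (F (Pr r)) - (if m = 0 then F (rR a (Pr r)) else 0)
                  else mode a m (F r) - (if m = 0 then F (rR a r) else 0))"

lemma step_hop:
  assumes ha: "homog Ph a" and F: "lin_r F" and fin: "\<And>r. fin_supp (F r)"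
  shows "step (a, m) F r - hop a m F r \<in> NT"
proof (cases "Ph a = - a")
  case True
  note p = odd_parts[OF True]
  have "step (a, m) F r - hop a m F r = mode 0 m (F r)"
    by (simp add: step_simp hop_def p True lin_rD[OF F])
  then show ?thesis using L0[OF fin] by simp
next
  case False
  then have ev: "Ph a = a" using ha by (simp add: homog_def)
  note p = even_parts[OF ev]
  have "step (a, m) F r - hop a m F r = mode 0 m (F (Pr r))"
    by (simp add: step_simp hop_def p False lin_rD[OF F])
  then show ?thesis using L0[OF fin] by simp
qed

lemma hop_cong:
  assumes "\<And>r. F r - G r \<in> NT"
  shows "hop a m F r - hop a m G r \<in> NT"
proof -
  define x where "x = (if Ph a = - a then Pr r else r)"
  define y where "y = (if Ph a = - a then rR a (Pr r) else rR a r)"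
  have eq: "hop a m F r - hop a m G r = mode a m (F x - G x) - (if m = 0 then F y - G y else 0)"
    by (simp add: hop_def x_def y_def)
  show ?thesis
  proof (cases "m = 0")
    case True
    show ?thesis unfolding eq using True NT_diff[OF NT_mode[OF assms] assms] by simp
  next
    case False
    show ?thesis unfolding eq using False NT_mode[OF assms] by simp
  qed
qed

lemma hop_odd: "Ph a = - a \<Longrightarrow> hop a m G r = mode a m (G (Pr r)) - (if m = 0 then G (rR a (Pr r)) else 0)"
  by (simp add: hop_def)
lemma hop_even: "Ph a \<noteq> - a \<Longrightarrow> hop a m G r = mode a m (G r) - (if m = 0 then G (rR a r) else 0)"
  by (simp add: hop_def)

lemma B_mixed: "Ph a = a \<Longrightarrow> Ph b = - b \<Longrightarrow> B a b = 0 \<and> B b a = 0"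
  using HD unfolding heis_data_def by meson

lemma comm_core:
  assumes ha: "homog Ph a" and hb: "homog Ph b" and F: "lin_r F" and fin: "\<And>r. fin_supp (F r)"
  shows "hop a m (hop b n F) r - fsc st (ksign Ph a b) (hop b n (hop a m F) r)
     - fsc st (of_int m * (if m + n = 0 then B a b else 0)) (F r) \<in> NT"
proof -
  define K where "K = (of_int m * (if m + n = 0 then B a b else 0) :: complex)"
  define k where "k = ksign Ph a b"
  note Fl = lin_rD[OF F]
  have L: "mode a m (mode b n Y) - fsc st k (mode b n (mode a m Y)) - fsc st K Y \<in> NT" if "fin_supp Y" for Y
    unfolding k_def K_def by (rule L2[OF that ha hb])
  have main: "hop a m (hop b n F) r - fsc st k (hop b n (hop a m F) r) - fsc st K (F r) \<in> NT"
  proof (cases "Ph a = - a")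
    case oa: True
    show ?thesis
    proof (cases "Ph b = - b")
      case ob: True
      have ks: "k = -1" using oa ob by (simp add: k_def ksign_def)
      have comm: "rR a (rR b x) = - rR b (rR a x)" for x
        using rR_comm[OF ha hb, of x] ks[unfolded k_def] by simp
      have "hop a m (hop b n F) r - fsc st k (hop b n (hop a m F) r) - fsc st K (F r)
         = mode a m (mode b n (F r)) - fsc st k (mode b n (mode a m (F r))) - fsc st K (F r)"
        unfolding ks by (cases "m = 0"; cases "n = 0") (simp_all add: hop_odd[OF oa] hop_odd[OF ob] oa ob Fl rR_par comm algebra_simps)
      then show ?thesis using L[OF fin] by simp
    next
      case eb: False
      then have eb': "Ph b = b" using hb by (simp add: homog_def)
      have ks: "k = 1" using eb by (simp add: k_def ksign_def)
      have BK: "K = 0" using B_mixed[OF eb' oa] by (simp add: K_def)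
      have comm: "rR a (rR b x) = rR b (rR a x)" for x
        using rR_comm[OF ha hb, of x] ks[unfolded k_def] by simp
      have "hop a m (hop b n F) r - fsc st k (hop b n (hop a m F) r) - fsc st K (F r)
         = mode a m (mode b n (F (Pr r))) - fsc st k (mode b n (mode a m (F (Pr r)))) - fsc st K (F (Pr r))"
        unfolding ks BK by (cases "m = 0"; cases "n = 0") (simp_all add: hop_odd[OF oa] hop_even[OF eb] oa eb' Fl rR_par comm algebra_simps)
      then show ?thesis using L[OF fin] by simp
    qed
  next
    case ea: False
    then have ea': "Ph a = a" using ha by (simp add: homog_def)
    have ks: "k = 1" using ea by (simp add: k_def ksign_def)
    have comm: "rR a (rR b x) = rR b (rR a x)" for x
      using rR_comm[OF ha hb, of x] ks[unfolded k_def] by simp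
    show ?thesis
    proof (cases "Ph b = - b")
      case ob: True
      have BK: "K = 0" using B_mixed[OF ea' ob] by (simp add: K_def)
      have "hop a m (hop b n F) r - fsc st k (hop b n (hop a m F) r) - fsc st K (F r)
         = mode a m (mode b n (F (Pr r))) - fsc st k (mode b n (mode a m (F (Pr r)))) - fsc st K (F (Pr r))"
        unfolding ks BK by (cases "m = 0"; cases "n = 0") (simp_all add: hop_even[OF ea] hop_odd[OF ob] ob ea' Fl rR_par comm algebra_simps)
      then show ?thesis using L[OF fin] by simp
    next
      case eb: False
      then have eb': "Ph b = b" using hb by (simp add: homog_def)
      have "hop a m (hop b n F) r - fsc st k (hop b n (hop a m F) r) - fsc st K (F r)
         = mode a m (mode b n (F r)) - fsc st k (mode b n (mode a m (F r))) - fsc st K (F r)"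
        unfolding ks by (cases "m = 0"; cases "n = 0") (simp_all add: hop_even[OF ea] hop_even[OF eb] ea' eb' Fl rR_par comm algebra_simps)
      then show ?thesis using L[OF fin] by simp
    qed
  qed
  then show ?thesis by (simp add: K_def k_def)
qed

end



context L begin

lemma R2_base:
  assumes ha: "homog Ph a" and hb: "homog Ph b"
  shows "Qw ((a, m) # (b, n) # w2) r s - Qw ((b, n) # (a, m) # w2) r (ss (ksign Ph a b) s)
      - Qw w2 r (ss (of_int m * (if m + n = 0 then B a b else 0)) s) \<in> NT"
proof -
  define F where "F = (\<lambda>r. Qw w2 r s)"
  define G where "G = (\<lambda>r. step (b, n) F r)"
  define G' where "G' = (\<lambda>r. step (a, m) F r)"
  define k where "k = ksign Ph a b"
  define K where "K = (of_int m * (if m + n = 0 then B a b else 0) :: complex)"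
  have linF: "lin_r F" unfolding F_def by (rule lin_Qw)
  have finF: "\<And>r. fin_supp (F r)" unfolding F_def by simp
  have linG: "lin_r G" unfolding G_def by (rule lin_r_step[OF linF])
  have finG: "\<And>r. fin_supp (G r)" unfolding G_def by (rule step_fin[OF finF])
  have linG': "lin_r G'" unfolding G'_def by (rule lin_r_step[OF linF])
  have finG': "\<And>r. fin_supp (G' r)" unfolding G'_def by (rule step_fin[OF finF])
  have d1: "step (a, m) G r - hop a m G r \<in> NT" by (rule step_hop[OF ha linG finG])
  have d2: "hop a m G r - hop a m (hop b n F) r \<in> NT"
    by (rule hop_cong) (unfold G_def, rule step_hop[OF hb linF finF])
  have d3: "step (b, n) G' r - hop b n G' r \<in> NT" by (rule step_hop[OF hb linG' finG'])
  have d4: "hop b n G' r - hop b n (hop a m F) r \<in> NT"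
    by (rule hop_cong) (unfold G'_def, rule step_hop[OF ha linF finF])
  have core: "hop a m (hop b n F) r - fsc st k (hop b n (hop a m F) r) - fsc st K (F r) \<in> NT"
    unfolding k_def K_def by (rule comm_core[OF ha hb linF finF])
  have eq: "Qw ((a, m) # (b, n) # w2) r s - Qw ((b, n) # (a, m) # w2) r (ss k s) - Qw w2 r (ss K s)
     = ((step (a, m) G r - hop a m G r) + (hop a m G r - hop a m (hop b n F) r))
       - fsc st k ((step (b, n) G' r - hop b n G' r) + (hop b n G' r - hop b n (hop a m F) r))
       + (hop a m (hop b n F) r - fsc st k (hop b n (hop a m F) r) - fsc st K (F r))"
    by (simp add: F_def G_def G'_def Qw_fsc_s step_fsc algebra_simps)
  have "Qw ((a, m) # (b, n) # w2) r s - Qw ((b, n) # (a, m) # w2) r (ss k s) - Qw w2 r (ss K s) \<in> NT"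
    unfolding eq by (intro NT_add NT_diff NT_fsc d1 d2 d3 d4 core)
  then show ?thesis by (simp add: k_def K_def)
qed

lemma R2:
  assumes ha: "homog Ph a" and hb: "homog Ph b"
  shows "Qw (w1 @ (a, m) # (b, n) # w2) r s - Qw (w1 @ (b, n) # (a, m) # w2) r (ss (ksign Ph a b) s)
      - Qw (w1 @ w2) r (ss (of_int m * (if m + n = 0 then B a b else 0)) s) \<in> NT"
  by (rule prefix[where D = "\<lambda>r w1. Qw (w1 @ (a, m) # (b, n) # w2) r s - Qw (w1 @ (b, n) # (a, m) # w2) r (ss (ksign Ph a b) s)
      - Qw (w1 @ w2) r (ss (of_int m * (if m + n = 0 then B a b else 0)) s)"])
     (simp_all add: step_diff R2_base[OF ha hb, simplified])

lemma rels_S_cases: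
  assumes "x \<in> ind_rels sh Ph B ss rS"
  obtains
      (1) w1 w2 c a' b m s where "x = tens (w1 @ (sh c a' + b, m) # w2) s - fsc ss c (tens (w1 @ (a', m) # w2) s) - tens (w1 @ (b, m) # w2) s"
    | (2) w1 w2 a' b m n s where "homog Ph a'" "homog Ph b" "x = tens (w1 @ (a', m) # (b, n) # w2) s - tens (w1 @ (b, n) # (a', m) # w2) (ss (ksign Ph a' b) s)
        - tens (w1 @ w2) (ss (of_int m * (if m + n = 0 then B a' b else 0)) s)"
    | (3) w a' m s where "m > 0" "x = tens (w @ [(a', m)]) s"
    | (4) w a' s where "x = tens (w @ [(a', 0)]) s - tens w (rS a' s)"
  using assms unfolding ind_rels_def by fast

lemma rels_q: assumes "x \<in> ind_rels sh Ph B ss rS" shows "fin_supp x \<and> qq r x \<in> NT"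
  using assms
proof (cases rule: rels_S_cases)
  case (1 w1 w2 c a' b m s) then show ?thesis by (simp add: qq_diff qq_fsc R1)
next
  case (2 w1 w2 a' b m n s) then show ?thesis using R2[OF 2(1,2)] by (simp add: qq_diff)
next
  case (3 w a' m s) then show ?thesis by (simp add: R3)
next
  case (4 w a' s) then show ?thesis by (simp add: qq_diff R4)
qed

lemma NS_q: assumes "v \<in> NS" shows "fin_supp v \<and> (\<forall>r. qq r v \<in> NT)"
proof -
  have "v \<in> FS.span (ind_rels sh Ph B ss rS)" using assms by (simp add: ind_N_def)
  then show ?thesis
proof (rule FS.span_induct_alt)
  show "fin_supp 0 \<and> (\<forall>r. qq r 0 \<in> NT)" by (simp add: NT_zero fin_supp_def)
next
  fix c x y assume x: "x \<in> ind_rels sh Ph B ss rS" and y: "fin_supp y \<and> (\<forall>r. qq r y \<in> NT)"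
  have fx: "fin_supp x" using rels_q[OF x] by simp
  show "fin_supp (fsc ss c x + y) \<and> (\<forall>r. qq r (fsc ss c x + y) \<in> NT)"
  proof (intro conjI allI)
    show "fin_supp (fsc ss c x + y)" using fx y by simp
    fix r
    have "qq r (fsc ss c x + y) = fsc st c (qq r x) + qq r y" using fx y by (simp add: qq_add qq_fsc)
    then show "qq r (fsc ss c x + y) \<in> NT" using rels_q[OF x] y by (simp add: NT_add NT_fsc)
  qed
qed
qed

end



definition phw :: "('h \<Rightarrow> 'h) \<Rightarrow> 'h word \<Rightarrow> 'h word" where
  "phw Ph w = map (\<lambda>(a, n). (Ph a, n)) w"

lemma phw_phw: "(\<And>a. Ph (Ph a) = a) \<Longrightarrow> phw Ph (phw Ph w) = w"
  by (induct w) (auto simp: phw_def)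

lemma phw_Cons[simp]: "phw Ph ((a, m) # w) = (Ph a, m) # phw Ph w"
  by (simp add: phw_def)
lemma phw_Nil[simp]: "phw Ph [] = []"
  by (simp add: phw_def)

lemma vpar_apply: "vpar Ph P X u = P (X (phw Ph u))"
  by (simp add: vpar_def phw_def)

context L begin

lemma phw_eq: "(phw Ph u = w) = (u = phw Ph w)"
  using phw_phw[of Ph] by auto

lemma vpar_t_add: "vpar Ph Pt (X + Y) = vpar Ph Pt X + vpar Ph Pt Y"
  by (simp add: fun_eq_iff vpar_apply)
lemma vpar_t_additive: "additive (vpar Ph Pt)"
  by (rule additive.intro) (rule vpar_t_add)
lemmas vpar_t[simp] = additive.zero[OF vpar_t_additive] additive.minus[OF vpar_t_additive]
  additive.diff[OF vpar_t_additive] vpar_t_add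
lemmas vpar_t_sum = additive.sum[OF vpar_t_additive]

lemma vpar_s_add: "vpar Ph Ps (X + Y) = vpar Ph Ps X + vpar Ph Ps Y"
  by (simp add: fun_eq_iff vpar_apply)
lemma vpar_s_additive: "additive (vpar Ph Ps)"
  by (rule additive.intro) (rule vpar_s_add)
lemmas vpar_s_sum = additive.sum[OF vpar_s_additive]

lemma vpar_tens_s: "vpar Ph Ps (tens w s) = tens (phw Ph w) (Ps s)"
  by (auto simp: fun_eq_iff vpar_apply tens_def phw_eq)
lemma vpar_tens_t: "vpar Ph Pt (tens w s) = tens (phw Ph w) (Pt s)"
  by (auto simp: fun_eq_iff vpar_apply tens_def phw_eq)

lemma vpar_mode: "vpar Ph Pt (mode a m X) = mode (Ph a) m (vpar Ph Pt X)"
proof (rule ext)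
  fix u show "vpar Ph Pt (mode a m X) u = mode (Ph a) m (vpar Ph Pt X) u"
  proof (cases u)
    case Nil then show ?thesis by (simp add: vpar_apply mode_def)
  next
    case (Cons x u')
    obtain b k where x: "x = (b, k)" by (cases x)
    have "(Ph b = a) = (b = Ph a)" by auto
    then show ?thesis using Cons x by (auto simp: vpar_apply mode_def)
  qed
qed

lemma vpar_Qw_all: "\<forall>r. vpar Ph Pt (Qw w r s) = Qw (phw Ph w) (Pr r) (Ps s)"
proof (rule list.induct[of "\<lambda>w. \<forall>r. vpar Ph Pt (Qw w r s) = Qw (phw Ph w) (Pr r) (Ps s)"])
  show "\<forall>r. vpar Ph Pt (Qw [] r s) = Qw (phw Ph []) (Pr r) (Ps s)" by (simp add: vpar_tens_t f_par)
next
  fix x :: "'h \<times> int" and w :: "'h word"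
  assume IH: "\<forall>r. vpar Ph Pt (Qw w r s) = Qw (phw Ph w) (Pr r) (Ps s)"
  obtain a m where x: "x = (a, m)" by (cases x)
  show "\<forall>r. vpar Ph Pt (Qw (x # w) r s) = Qw (phw Ph (x # w)) (Pr r) (Ps s)"
    unfolding x
    by (cases "m = 0") (simp_all add: step_simp vpar_mode IH rR_par)
qed

lemma vpar_Qw: "vpar Ph Pt (Qw w r s) = Qw (phw Ph w) (Pr r) (Ps s)"
  using vpar_Qw_all by blast

lemma c5: assumes "fin_supp v" shows "qq (Pr r) (vpar Ph Ps v) = vpar Ph Pt (qq r v)"
proof -
  let ?A = "{u. v u \<noteq> 0}"
  have "vpar Ph Ps v = (\<Sum>u\<in>?A. tens (phw Ph u) (Ps (v u)))"
    by (subst decomp[OF assms]) (simp add: vpar_s_sum vpar_tens_s)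
  then have "qq (Pr r) (vpar Ph Ps v) = (\<Sum>u\<in>?A. Qw (phw Ph u) (Pr r) (Ps (v u)))"
    by (simp add: qq_sum)
  also have "\<dots> = vpar Ph Pt (qq r v)"
    by (simp add: qq_def vpar_t_sum vpar_Qw)
  finally show ?thesis .
qed

lemma qq_mode: assumes "fin_supp v"
  shows "qq r (mode x m v) = (\<Sum>u\<in>{u. v u \<noteq> 0}. Qw ((x, m) # u) r (v u))"
proof -
  have "mode x m v = (\<Sum>u\<in>{u. v u \<noteq> 0}. tens ((x, m) # u) (v u))"
    by (subst decomp[OF assms]) (simp add: mode_sum mode_tens)
  then show ?thesis by (simp add: qq_sum)
qed

lemma rR_split: "rR a x = rR (ea a) x + rR (oa a) x"
  using rR_a(1)[of "ea a" "oa a" x] ea_oa[of a] by simp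

lemma c7_tens:
  "mode a m (Qw w r s) - ((if m = 0 then Qw w (rR a r) s else 0) + Qw ((ea a, m) # w) r s
      + Qw ((oa a, m) # w) (Pr r) s) \<in> NT"
proof -
  let ?F = "\<lambda>r. Qw w r s"
  have t1: "mode (sh 1 (ea a) + oa a) m (?F r) - fsc st 1 (mode (ea a) m (?F r)) - mode (oa a) m (?F r) \<in> NT"
    by (rule L1) simp
  have t0: "mode 0 m (?F (Pr r)) \<in> NT" by (rule L0) simp
  have "mode a m (Qw w r s) - ((if m = 0 then Qw w (rR a r) s else 0) + Qw ((ea a, m) # w) r s
      + Qw ((oa a, m) # w) (Pr r) s)
     = (mode (sh 1 (ea a) + oa a) m (?F r) - fsc st 1 (mode (ea a) m (?F r)) - mode (oa a) m (?F r))
       - mode 0 m (?F (Pr r)) - mode 0 m (?F (Pr r))"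
    by (cases "m = 0") (simp_all add: step_simp ea_oa rR_split[of a r] algebra_simps)
  then show ?thesis using NT_diff[OF NT_diff[OF t1 t0] t0] by simp
qed

lemma c7: assumes "fin_supp v"
  shows "mode a m (qq r v) - ((if m = 0 then qq (rR a r) v else 0) + qq r (mode (ea a) m v)
      + qq (Pr r) (mode (oa a) m v)) \<in> NT"
proof -
  let ?A = "{u. v u \<noteq> 0}"
  let ?D = "\<lambda>u. mode a m (Qw u r (v u)) - ((if m = 0 then Qw u (rR a r) (v u) else 0) + Qw ((ea a, m) # u) r (v u)
      + Qw ((oa a, m) # u) (Pr r) (v u))"
  have "mode a m (qq r v) - ((if m = 0 then qq (rR a r) v else 0) + qq r (mode (ea a) m v)
      + qq (Pr r) (mode (oa a) m v)) = (\<Sum>u\<in>?A. ?D u)"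
    unfolding qq_mode[OF assms]
    by (cases "m = 0") (simp_all add: qq_def mode_sum sum_subtractf sum.distrib)
  also have "\<dots> \<in> NT" by (intro NT_sum c7_tens)
  finally show ?thesis .
qed

end



context L begin

lemma NS_neg: "x \<in> NS \<Longrightarrow> - x \<in> NS" unfolding ind_N_def by (rule FS.span_neg)

lemma fsc_s_add[simp]: "fsc ss c (X + Y) = fsc ss c X + fsc ss c Y"
  by (rule FS.scale_right_distrib)
lemma fsc_s_diff[simp]: "fsc ss c (X - Y) = fsc ss c X - fsc ss c Y"
  by (rule FS.scale_right_diff_distrib)
lemma fsc_s_one[simp]: "fsc ss 1 X = X"
  by (rule FS.scale_one)

lemma LS1: assumes "fin_supp X"
  shows "mode (sh c a + b) m X - fsc ss c (mode a m X) - mode b m X \<in> NS"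
proof -
  let ?A = "{u. X u \<noteq> 0}"
  have "mode (sh c a + b) m X - fsc ss c (mode a m X) - mode b m X =
     (\<Sum>u\<in>?A. tens ((sh c a + b, m) # u) (X u) - fsc ss c (tens ((a, m) # u) (X u)) - tens ((b, m) # u) (X u))"
    apply (subst (1 2 3) decomp[OF assms])
    by (simp add: mode_sum mode_tens FS.scale_sum_right sum_subtractf)
  also have "\<dots> \<in> NS"
    using rel1_in[where ws="[]" and sc = ss and rho = rS] by (intro NS_sum NS_base) simp
  finally show ?thesis .
qed

lemma LS0: assumes "fin_supp X" shows "mode 0 m X \<in> NS"
proof -
  have "mode (sh 1 0 + 0) m X - fsc ss 1 (mode 0 m X) - mode 0 m X \<in> NS" by (rule LS1[OF assms])
  then have "- mode 0 m X \<in> NS" by simp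
  then show ?thesis using NS_neg by fastforce
qed

lemma LS_split: assumes "fin_supp X" shows "mode a m X - (mode (ea a) m X + mode (oa a) m X) \<in> NS"
proof -
  have "mode (sh 1 (ea a) + oa a) m X - fsc ss 1 (mode (ea a) m X) - mode (oa a) m X \<in> NS" by (rule LS1[OF assms])
  then show ?thesis by (simp add: ea_oa algebra_simps)
qed

lemma uniq:
  assumes Q: "is_Qf sh Ph B sr Pr rR ss Ps rS st Pt rT f q'"
    and fv: "fin_supp v"
  shows "q' r v - qq r v \<in> NT"
proof -
  have Q2: "\<And>r v v'. fin_supp v \<Longrightarrow> fin_supp v' \<Longrightarrow> v - v' \<in> NS \<Longrightarrow> q' r v - q' r v' \<in> NT"
    using Q unfolding is_Qf_def Let_def by blast
  have Q4: "\<And>c r v v'. fin_supp v \<Longrightarrow> fin_supp v' \<Longrightarrow> q' r (fsc ss c v + v') - (fsc st c (q' r v) + q' r v') \<in> NT"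
    using Q unfolding is_Qf_def Let_def by blast
  have Q6: "\<And>r s. q' r (tens [] s) - tens [] (f r s) \<in> NT"
    using Q unfolding is_Qf_def Let_def by blast
  have Q7: "\<And>a m r v. fin_supp v \<Longrightarrow> mode a m (q' r v) - ((if m = 0 then q' (rR a r) v else 0)
      + q' r (mode (ea a) m v) + q' (Pr r) (mode (oa a) m v)) \<in> NT"
    using Q unfolding is_Qf_def Let_def by blast
  have Q0: "q' r 0 \<in> NT" for r
  proof -
    have "q' r (fsc ss 1 0 + 0) - (fsc st 1 (q' r 0) + q' r 0) \<in> NT" by (rule Q4) simp_all
    then have "- q' r 0 \<in> NT" by simp
    then show ?thesis using NT_neg by fastforce
  qed
  have Qadd: "q' r (x + y) - (q' r x + q' r y) \<in> NT" if "fin_supp x" "fin_supp y" for r x y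
  proof -
    have "q' r (fsc ss 1 x + y) - (fsc st 1 (q' r x) + q' r y) \<in> NT" by (rule Q4) (use that in simp_all)
    then show ?thesis by simp
  qed
  have QNS: "q' r x \<in> NT" if "x \<in> NS" for r x
  proof -
    have fx: "fin_supp x" using NS_q[OF that] by simp
    have "q' r x - q' r 0 \<in> NT" by (rule Q2) (use fx that in simp_all)
    then show ?thesis using NT_add[OF _ Q0[of r]] by fastforce
  qed
  have U1: "\<forall>r. q' r (tens w s) - Qw w r s \<in> NT" for w s
  proof (rule list.induct[of "\<lambda>w. \<forall>r. q' r (tens w s) - Qw w r s \<in> NT"])
    show "\<forall>r. q' r (tens [] s) - Qw [] r s \<in> NT" using Q6 by simp
  next
    fix x :: "'h \<times> int" and w :: "'h word"
    assume IH: "\<forall>r. q' r (tens w s) - Qw w r s \<in> NT"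
    obtain a m where x: "x = (a, m)" by (cases x)
    show "\<forall>r. q' r (tens (x # w) s) - Qw (x # w) r s \<in> NT"
    proof
      fix r
      define V where "V = tens w s"
      define F where "F = (\<lambda>r. Qw w r s)"
      have fV: "fin_supp V" by (simp add: V_def)
      have A1: "q' r (mode a m V) - q' r (mode (ea a) m V + mode (oa a) m V) \<in> NT"
        by (rule Q2) (use fV LS_split[OF fV] in simp_all)
      have A2: "q' r (mode (ea a) m V + mode (oa a) m V) - (q' r (mode (ea a) m V) + q' r (mode (oa a) m V)) \<in> NT"
        by (rule Qadd) (simp_all add: fV)
      have X7: "mode (ea a) m (q' r V) - ((if m = 0 then q' (rR (ea a) r) V else 0)
          + q' r (mode (ea a) m V) + q' (Pr r) (mode 0 m V)) \<in> NT"
        using Q7[OF fV, of "ea a" m r] by simp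
      have X7': "mode (oa a) m (q' (Pr r) V) - ((if m = 0 then q' (rR (oa a) (Pr r)) V else 0)
          + q' (Pr r) (mode 0 m V) + q' r (mode (oa a) m V)) \<in> NT"
        using Q7[OF fV, of "oa a" m "Pr r"] by simp
      have Z: "q' (Pr r) (mode 0 m V) \<in> NT" by (rule QNS[OF LS0[OF fV]])
      have I: "q' r' V - F r' \<in> NT" for r' using IH by (simp add: V_def F_def)
      have eq: "q' r (tens (x # w) s) - Qw (x # w) r s =
          (q' r (mode a m V) - q' r (mode (ea a) m V + mode (oa a) m V))
          + (q' r (mode (ea a) m V + mode (oa a) m V) - (q' r (mode (ea a) m V) + q' r (mode (oa a) m V)))
          - (mode (ea a) m (q' r V) - ((if m = 0 then q' (rR (ea a) r) V else 0)
               + q' r (mode (ea a) m V) + q' (Pr r) (mode 0 m V)))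
          - (mode (oa a) m (q' (Pr r) V) - ((if m = 0 then q' (rR (oa a) (Pr r)) V else 0)
               + q' (Pr r) (mode 0 m V) + q' r (mode (oa a) m V)))
          - q' (Pr r) (mode 0 m V) - q' (Pr r) (mode 0 m V)
          + mode (ea a) m (q' r V - F r) - (if m = 0 then q' (rR (ea a) r) V - F (rR (ea a) r) else 0)
          + mode (oa a) m (q' (Pr r) V - F (Pr r)) - (if m = 0 then q' (rR (oa a) (Pr r)) V - F (rR (oa a) (Pr r)) else 0)"
        unfolding x
        by (cases "m = 0") (simp_all add: V_def F_def mode_tens step_simp algebra_simps)
      show "q' r (tens (x # w) s) - Qw (x # w) r s \<in> NT"
        unfolding eq
        by (intro NT_add NT_diff A1 A2 X7 X7' Z NT_mode I) (simp_all add: I NT_zero)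
    qed
  qed
  have Qsum: "(\<forall>i\<in>A. fin_supp (X i)) \<longrightarrow> q' r (sum X A) - (\<Sum>i\<in>A. q' r (X i)) \<in> NT" if "finite A" for A X
    using that
  proof (rule finite_induct)
    show "(\<forall>i\<in>{}. fin_supp (X i)) \<longrightarrow> q' r (sum X {}) - (\<Sum>i\<in>{}. q' r (X i)) \<in> NT" using Q0 by simp
  next
    fix x F assume fin: "finite F" and nx: "x \<notin> F"
      and IH: "(\<forall>i\<in>F. fin_supp (X i)) \<longrightarrow> q' r (sum X F) - (\<Sum>i\<in>F. q' r (X i)) \<in> NT"
    show "(\<forall>i\<in>insert x F. fin_supp (X i)) \<longrightarrow> q' r (sum X (insert x F)) - (\<Sum>i\<in>insert x F. q' r (X i)) \<in> NT"
    proof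
      assume a: "\<forall>i\<in>insert x F. fin_supp (X i)"
      have e: "q' r (sum X (insert x F)) - (\<Sum>i\<in>insert x F. q' r (X i))
        = (q' r (X x + sum X F) - (q' r (X x) + q' r (sum X F))) + (q' r (sum X F) - (\<Sum>i\<in>F. q' r (X i)))"
        using fin nx by simp
      have "q' r (X x + sum X F) - (q' r (X x) + q' r (sum X F)) \<in> NT"
        by (rule Qadd) (use a in auto)
      moreover have "q' r (sum X F) - (\<Sum>i\<in>F. q' r (X i)) \<in> NT" using IH a by simp
      ultimately show "q' r (sum X (insert x F)) - (\<Sum>i\<in>insert x F. q' r (X i)) \<in> NT"
        unfolding e by (rule NT_add)
    qed
  qed
  let ?A = "{u. v u \<noteq> 0}"
  have finA: "finite ?A" using fv by (simp add: fin_supp_def)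
  have S1: "q' r (\<Sum>u\<in>?A. tens u (v u)) - (\<Sum>u\<in>?A. q' r (tens u (v u))) \<in> NT"
    using Qsum[OF finA, of "\<lambda>u. tens u (v u)"] by simp
  have S2: "(\<Sum>u\<in>?A. q' r (tens u (v u)) - Qw u r (v u)) \<in> NT"
    by (intro NT_sum) (use U1 in blast)
  have "q' r v - qq r v = (q' r (\<Sum>u\<in>?A. tens u (v u)) - (\<Sum>u\<in>?A. q' r (tens u (v u))))
      + (\<Sum>u\<in>?A. q' r (tens u (v u)) - Qw u r (v u))"
    apply (subst (1) decomp[OF fv])
    by (simp add: qq_def sum_subtractf)
  then show ?thesis using NT_add[OF S1 S2] by simp
qed

end


theorem lemma3p5:
  fixes sh :: "complex \<Rightarrow> 'h::ab_group_add \<Rightarrow> 'h" and Ph :: "'h \<Rightarrow> 'h"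
    and B :: "'h \<Rightarrow> 'h \<Rightarrow> complex"
    and sr :: "complex \<Rightarrow> 'r::ab_group_add \<Rightarrow> 'r" and Pr :: "'r \<Rightarrow> 'r" and rR :: "'h \<Rightarrow> 'r \<Rightarrow> 'r"
    and ss :: "complex \<Rightarrow> 's::ab_group_add \<Rightarrow> 's" and Ps :: "'s \<Rightarrow> 's" and rS :: "'h \<Rightarrow> 's \<Rightarrow> 's"
    and st :: "complex \<Rightarrow> 't::ab_group_add \<Rightarrow> 't" and Pt :: "'t \<Rightarrow> 't" and rT :: "'h \<Rightarrow> 't \<Rightarrow> 't"
    and f :: "'r \<Rightarrow> 's \<Rightarrow> 't"
  assumes "heis_data sh Ph B"
    and "h_module sh Ph sr Pr rR"
    and "h_module sh Ph ss Ps rS"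
    and "h_module sh Ph st Pt rT"
    and "even_intertwiner sh Ph sr Pr rR ss Ps rS st Pt rT f"
  shows "\<exists>q. is_Qf sh Ph B sr Pr rR ss Ps rS st Pt rT f q \<and>
           (\<forall>q'. is_Qf sh Ph B sr Pr rR ss Ps rS st Pt rT f q' \<longrightarrow>
              (\<forall>r v. fin_supp v \<longrightarrow> q' r v - q r v \<in> ind_N sh Ph B st rT))"
proof -
  interpret L sh Ph B sr Pr rR ss Ps rS st Pt rT f
    by (rule L.intro[OF assms])
  have ex: "is_Qf sh Ph B sr Pr rR ss Ps rS st Pt rT f qq"
    unfolding is_Qf_def Let_def
    apply (intro conjI allI impI)
    subgoal by simp
    subgoal for r v v'
      apply (elim conjE)
      apply (subst qq_diff[symmetric])
        apply assumption+
      using NS_q by blast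
    subgoal by (simp add: qq_r NT_zero)
    subgoal for c r v v' by (simp add: qq_add qq_fsc NT_zero)
    subgoal for r v by (simp add: c5 NT_zero)
    subgoal by (simp add: NT_zero)
    subgoal for a m r v by (rule c7)
    done
  show ?thesis
    apply (rule exI[of _ qq])
    apply (intro conjI allI impI ex)
    apply (rule uniq)
     apply assumption+
    done
qed

end
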